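(* Consider the fast-slow system $\dot u = w$, $\dot v = u$, $\varepsilon \dot w = z$, $\varepsilon \dot z = \tfrac12(w^3-w)-v$ at $\varepsilon=0$, with Hamiltonian $H(u,v,w,z)=\tfrac18(4u^2-8vw-2w^2+w^4-4z^2)$. For $\mu\in\mathbb R$ there exists a singular periodic orbit $\gamma_0^\mu\subset\{H=\mu\}$ consisting of precisely two slow segments (trajectories of the reduced problem of positive length) and two fast segments (heteroclinic orbits of the layer problem), with slow segments lying entirely in $\mathcal C_{0,l}$ and $\mathcal C_{0,r}$, if and only if \[ \mu\in I_\mu:=\left(-\tfrac18,\ \tfrac1{24}\right). \]
   Context: Critical manifold: $\mathcal C_0=\{z=0,\ v=\tfrac12(w^3-w)\}$; $\mathcal C_{0,l}=\mathcal C_0\cap\{w<-1/\sqrt3\}$, $\mathcal C_{0,r}=\mathcal C_0\cap\{w>1/\sqrt3\}$. Reduced problem: $\dot u=w$, $\dot v=u$ on $\mathcal C_0$. Layer problem: $w'=z$, $z'=\tfrac12(w^3-w)-\bar v$ with $(u,v)=(\bar u,\bar v)$ fixed. A singular periodic orbit is a closed curve obtained by concatenating, alternately, trajectory segments of the reduced problem on $\mathcal C_0\cap\{H=\mu\}$ and heteroclinic orbits of the layer problem whose endpoints (equilibria of the layer problem) coincide with the endpoints of the adjacent slow segments, all lying in the level set $\{H=\mu\}$. *)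

theory Defs
  imports Complex_Main
begin

type_synonym pt = "real \<times> real \<times> real \<times> real"

definition H :: "pt \<Rightarrow> real" where
  "H p = (case p of (u, v, w, z) \<Rightarrow> (4*u^2 - 8*v*w - 2*w^2 + w^4 - 4*z^2) / 8)"

definition C0 :: "pt set" where
  "C0 = {(u, v, w, z). z = 0 \<and> v = (w^3 - w) / 2}"

definition C0l :: "pt set" where
  "C0l = C0 \<inter> {(u, v, w, z). w < - 1 / sqrt 3}"

definition C0r :: "pt set" where
  "C0r = C0 \<inter> {(u, v, w, z). w > 1 / sqrt 3}"

definition reduced_traj ::
  "(real \<Rightarrow> real) \<Rightarrow> (real \<Rightarrow> real) \<Rightarrow> (real \<Rightarrow> real) \<Rightarrow> (real \<Rightarrow> real) \<Rightarrow> real \<Rightarrow> bool" where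
  "reduced_traj u v w z T \<longleftrightarrow> T > 0 \<and>
     (\<forall>t\<in>{0..T}. (u t, v t, w t, z t) \<in> C0 \<and>
        (u has_real_derivative w t) (at t within {0..T}) \<and>
        (v has_real_derivative u t) (at t within {0..T}))"

definition layer_heteroclinic ::
  "real \<Rightarrow> (real \<Rightarrow> real) \<Rightarrow> (real \<Rightarrow> real) \<Rightarrow> real \<Rightarrow> real \<Rightarrow> bool" where
  "layer_heteroclinic vb w z wm wp \<longleftrightarrow>
     (\<forall>t. (w has_real_derivative z t) (at t) \<and>
          (z has_real_derivative ((w t ^ 3 - w t) / 2 - vb)) (at t)) \<and>
     (wm ^ 3 - wm) / 2 = vb \<and> (wp ^ 3 - wp) / 2 = vb \<and> wm \<noteq> wp \<and>
     (w \<longlongrightarrow> wm) at_bot \<and> (z \<longlongrightarrow> 0) at_bot \<and>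
     (w \<longlongrightarrow> wp) at_top \<and> (z \<longlongrightarrow> 0) at_top"

text \<open>gamma is a singular periodic orbit made of exactly two slow segments
  (one in C0l, one in C0r) and two fast segments, concatenated alternately:
  slow1 (in C0l) -> fast1 -> slow2 (in C0r) -> fast2 -> back to slow1.\<close>
definition sing_orbit_2slow_2fast :: "pt set \<Rightarrow> bool" where
  "sing_orbit_2slow_2fast \<gamma> \<longleftrightarrow>
   (\<exists>u1 v1 w1 z1 T1 u2 v2 w2 z2 T2 ub1 vb1 W1 Z1 a1 b1 ub2 vb2 W2 Z2 a2 b2.
      reduced_traj u1 v1 w1 z1 T1 \<and> (\<forall>t\<in>{0..T1}. (u1 t, v1 t, w1 t, z1 t) \<in> C0l) \<and>
      reduced_traj u2 v2 w2 z2 T2 \<and> (\<forall>t\<in>{0..T2}. (u2 t, v2 t, w2 t, z2 t) \<in> C0r) \<and>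
      layer_heteroclinic vb1 W1 Z1 a1 b1 \<and>
      layer_heteroclinic vb2 W2 Z2 a2 b2 \<and>
      (u1 T1, v1 T1, w1 T1, z1 T1) = (ub1, vb1, a1, 0) \<and>
      (ub1, vb1, b1, 0) = (u2 0, v2 0, w2 0, z2 0) \<and>
      (u2 T2, v2 T2, w2 T2, z2 T2) = (ub2, vb2, a2, 0) \<and>
      (ub2, vb2, b2, 0) = (u1 0, v1 0, w1 0, z1 0) \<and>
      \<gamma> = (\<lambda>t. (u1 t, v1 t, w1 t, z1 t)) ` {0..T1}
          \<union> (\<lambda>t. (ub1, vb1, W1 t, Z1 t)) ` UNIV
          \<union> (\<lambda>t. (u2 t, v2 t, w2 t, z2 t)) ` {0..T2}
          \<union> (\<lambda>t. (ub2, vb2, W2 t, Z2 t)) ` UNIV)"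

end

theory Submission imports Defs "HOL-Analysis.Analysis" "HOL-Real_Asymp.Real_Asymp" begin

lemma alg:
  fixes a b cc :: real
  assumes "a \<noteq> b" "a^3 - a = 2*cc" "b^3 - b = 2*cc"
    "a^4 - 2*a^2 - 8*cc*a = b^4 - 2*b^2 - 8*cc*b"
  shows "a + b = 0 \<and> a^2 = 1"
proof -
  have e1: "a^2 + a*b + b^2 = 1"
  proof -
    have "(a - b) * (a^2 + a*b + b^2 - 1) = 0" using assms(2,3) by (simp add: algebra_simps power3_eq_cube power2_eq_square)
    thus ?thesis using assms(1) by simp
  qed
  have e2: "(a+b)*(a^2+b^2) - 2*(a+b) - 8*cc = 0"
  proof -
    have "(a - b) * ((a+b)*(a^2+b^2) - 2*(a+b) - 8*cc) = 0" using assms(4)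
      by (simp add: algebra_simps power4_eq_xxxx power2_eq_square)
    thus ?thesis using assms(1) by simp
  qed
  define q where "q = a + b"
  define p where "p = a * b"
  have p: "p = q^2 - 1" using e1 unfolding q_def p_def by (simp add: algebra_simps power2_eq_square)
  have v: "4*cc = a^3 + b^3 - q" using assms(2,3) q_def by simp
  have cube: "a^3 + b^3 = q^3 - 3 * p * q" unfolding q_def p_def by (simp add: algebra_simps power3_eq_cube)
  have sq: "a^2 + b^2 = q^2 - 2*p" unfolding q_def p_def by (simp add: algebra_simps power2_eq_square)
  have "q * (q^2 - 2*p) - 2*q - 2*(q^3 - 3 * p * q - q) = 0" using e2 v cube sq q_def by simp
  hence "q * (3*q^2 - 4) = 0" using p by (simp add: algebra_simps power2_eq_square power3_eq_cube)
  moreover have "3*q^2 \<noteq> 4"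
  proof
    assume h: "3*q^2 = 4"
    have "(a-b)^2 = q^2 - 4*p" unfolding q_def p_def by (simp add: algebra_simps power2_eq_square)
    also have "\<dots> = 0" using p h by simp
    finally show False using assms(1) by simp
  qed
  ultimately have s0: "q = 0" by simp
  hence bma: "b = -a" using q_def by simp
  have "a^2 + a*(-a) + (-a)^2 = 1" using e1 unfolding bma .
  hence "a^2 = 1" by (simp add: power2_eq_square)
  thus ?thesis using bma by simp
qed

lemma sq_gt: fixes w :: real assumes "w < -1/sqrt 3" shows "w^2 > 1/3"
proof -
  have "0 < 1/sqrt 3" by simp
  hence "(1/sqrt 3)^2 < (-w)^2" using assms by (intro power_strict_mono) auto
  thus ?thesis by (simp add: power_divide)
qed

lemma sq_gt': fixes w :: real assumes "w > 1/sqrt 3" shows "w^2 > 1/3"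
  using sq_gt[of "-w"] assms by simp

lemma H_C0: "H (u, (w^3 - w)/2, w, 0) = (4*u^2 - 3*w^4 + 2*w^2)/8"
  unfolding H_def by (simp add: field_simps power2_eq_square power3_eq_cube power4_eq_xxxx)

lemma nec:
  assumes so: "sing_orbit_2slow_2fast \<gamma>" and sub: "\<gamma> \<subseteq> {p. H p = \<mu>}"
  shows "-1/8 < \<mu> \<and> \<mu> < 1/24"
proof -
  from so obtain u1 v1 w1 z1 T1 u2 v2 w2 z2 T2 ub1 vb1 W1 Z1 a1 b1 ub2 vb2 W2 Z2 a2 b2 where
    r1: "reduced_traj u1 v1 w1 z1 T1" and l1: "\<forall>t\<in>{0..T1}. (u1 t, v1 t, w1 t, z1 t) \<in> C0l" and
    r2: "reduced_traj u2 v2 w2 z2 T2" and l2: "\<forall>t\<in>{0..T2}. (u2 t, v2 t, w2 t, z2 t) \<in> C0r" and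
    h1: "layer_heteroclinic vb1 W1 Z1 a1 b1" and
    h2: "layer_heteroclinic vb2 W2 Z2 a2 b2" and
    e1: "(u1 T1, v1 T1, w1 T1, z1 T1) = (ub1, vb1, a1, 0)" and
    e2: "(ub1, vb1, b1, 0) = (u2 0, v2 0, w2 0, z2 0)" and
    e3: "(u2 T2, v2 T2, w2 T2, z2 T2) = (ub2, vb2, a2, 0)" and
    e4: "(ub2, vb2, b2, 0) = (u1 0, v1 0, w1 0, z1 0)" and
    g: "\<gamma> = (\<lambda>t. (u1 t, v1 t, w1 t, z1 t)) ` {0..T1}
          \<union> (\<lambda>t. (ub1, vb1, W1 t, Z1 t)) ` UNIV
          \<union> (\<lambda>t. (u2 t, v2 t, w2 t, z2 t)) ` {0..T2}
          \<union> (\<lambda>t. (ub2, vb2, W2 t, Z2 t)) ` UNIV"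
    using so unfolding sing_orbit_2slow_2fast_def by (elim exE conjE) (rule that; assumption)
  have T1: "T1 > 0" and T2: "T2 > 0" using r1 r2 unfolding reduced_traj_def by auto
  have H1: "H (u1 t, v1 t, w1 t, z1 t) = \<mu>" if "t \<in> {0..T1}" for t
  proof -
    have "(u1 t, v1 t, w1 t, z1 t) \<in> \<gamma>" unfolding g using that by (intro UnI1 imageI)
    thus ?thesis using sub by auto
  qed
  have H2: "H (u2 t, v2 t, w2 t, z2 t) = \<mu>" if "t \<in> {0..T2}" for t
  proof -
    have "(u2 t, v2 t, w2 t, z2 t) \<in> \<gamma>" unfolding g using that by (intro UnI1 UnI2 imageI)
    thus ?thesis using sub by auto
  qed
  have C1: "z1 t = 0 \<and> v1 t = (w1 t^3 - w1 t)/2 \<and> w1 t < -1/sqrt 3" if "t \<in> {0..T1}" for t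
    using l1 that unfolding C0l_def C0_def by auto
  have C2: "z2 t = 0 \<and> v2 t = (w2 t^3 - w2 t)/2 \<and> w2 t > 1/sqrt 3" if "t \<in> {0..T2}" for t
    using l2 that unfolding C0r_def C0_def by auto
  have E1: "4*u1 t^2 - 3*w1 t^4 + 2*w1 t^2 = 8*\<mu>" if "t \<in> {0..T1}" for t
    using H1[OF that] C1[OF that] H_C0[of "u1 t" "w1 t"] by simp
  have in0: "(0::real) \<in> {0..T1}" "T1 \<in> {0..T1}" "(0::real) \<in> {0..T2}" "T2 \<in> {0..T2}"
    using T1 T2 by auto
  have Fa: "H (ub1, vb1, a1, 0) = \<mu>" using H1[OF in0(2)] e1 by simp
  have Fb: "H (ub1, vb1, b1, 0) = \<mu>" using H2[OF in0(3)] e2 by simp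
  have hh1: "(a1^3 - a1)/2 = vb1" "(b1^3 - b1)/2 = vb1" "a1 \<noteq> b1"
    using h1 unfolding layer_heteroclinic_def by auto
  have "a1^4 - 2*a1^2 - 8 * vb1*a1 = b1^4 - 2*b1^2 - 8 * vb1*b1"
    using Fa Fb unfolding H_def by simp
  hence A1: "a1 + b1 = 0 \<and> a1^2 = 1" using alg[of a1 b1 vb1] hh1 by simp
  have sp: "1/sqrt 3 > (0::real)" by simp
  have "a1 < -(1/sqrt 3)" using C1[OF in0(2)] e1 by simp
  hence "a1 < 0" using sp by linarith
  moreover have "a1 = 1 \<or> a1 = -1" using A1 by (simp add: power2_eq_1_iff)
  ultimately have wT: "w1 T1 = -1" using e1 by auto
  have Fa2: "H (ub2, vb2, a2, 0) = \<mu>" using H2[OF in0(4)] e3 by simp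
  have Fb2: "H (ub2, vb2, b2, 0) = \<mu>" using H1[OF in0(1)] e4 by simp
  have hh2: "(a2^3 - a2)/2 = vb2" "(b2^3 - b2)/2 = vb2" "a2 \<noteq> b2"
    using h2 unfolding layer_heteroclinic_def by auto
  have "a2^4 - 2*a2^2 - 8 * vb2*a2 = b2^4 - 2*b2^2 - 8 * vb2*b2"
    using Fa2 Fb2 unfolding H_def by simp
  hence A2: "a2 + b2 = 0 \<and> a2^2 = 1" using alg[of a2 b2 vb2] hh2 by simp
  have "a2 > 1/sqrt 3" using C2[OF in0(4)] e3 by simp
  hence "a2 > 0" using sp by linarith
  moreover have "a2 = 1 \<or> a2 = -1" using A2 by (simp add: power2_eq_1_iff)
  ultimately have "a2 = 1" by auto
  hence w0: "w1 0 = -1" using A2 e4 by auto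
  have U0: "4*u1 0^2 = 1 + 8*\<mu>" using E1[OF in0(1)] w0 by simp
  have UT: "4*u1 T1^2 = 1 + 8*\<mu>" using E1[OF in0(2)] wT by simp
  have der: "(u1 has_real_derivative w1 t) (at t within {0..T1})" if "t \<in> {0..T1}" for t
    using r1 that unfolding reduced_traj_def by blast
  obtain xi where xi: "xi \<in> {0..T1}" "u1 T1 - u1 0 = w1 xi * (T1 - 0)"
    using mvt_very_simple[of 0 T1 u1 "\<lambda>x. (*) (w1 x)"] der T1
    unfolding has_field_derivative_def by auto
  have "w1 xi < -(1/sqrt 3)" using C1[OF xi(1)] by simp
  hence "w1 xi < 0" using sp by linarith
  hence "w1 xi * T1 < 0" using T1 by (simp add: mult_neg_pos)
  hence lt: "u1 T1 < u1 0" using xi(2) by simp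
  have "u1 0^2 = u1 T1^2" using U0 UT by simp
  hence "u1 T1 = - u1 0" using lt by (auto simp: power2_eq_iff)
  hence pos: "u1 0 > 0" "u1 T1 < 0" using lt by auto
  have "0 < 4*u1 0^2" using pos by simp
  hence m1: "-1/8 < \<mu>" using U0 by simp
  have cont: "continuous_on {0..T1} u1" by (rule DERIV_continuous_on[OF der])
  obtain et where et: "0 \<le> et" "et \<le> T1" "u1 et = 0"
    using IVT2'[of u1 T1 0 0, OF _ _ _ cont] pos T1 by auto
  have et': "et \<in> {0..T1}" using et by auto
  have x3: "w1 et^2 > 1/3" using C1[OF et'] sq_gt by blast
  have "8*\<mu> = 2*w1 et^2 - 3*(w1 et^2)^2" using E1[OF et'] et(3) by (simp add: power_mult_distrib power4_eq_xxxx power2_eq_square)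
  moreover have "2*x - 3*x^2 < 1/3" if "x > 1/3" for x :: real
  proof -
    have "0 < 3*(x - 1/3)^2" using that by simp
    thus ?thesis by (simp add: power2_eq_square algebra_simps)
  qed
  ultimately have "\<mu> < 1/24" using x3 by fastforce
  thus ?thesis using m1 by simp
qed


lemma dV:
  fixes c y :: real assumes c: "c > 0"
  defines "r \<equiv> \<lambda>y::real. sqrt (c + 12 * y^2)"
  defines "q \<equiv> \<lambda>y. (1 + r y) / 3"
  defines "W \<equiv> \<lambda>y. - sqrt (q y)"
  shows "((\<lambda>y. (W y ^ 3 - W y) / 2) has_real_derivative
           (3 * W y ^ 2 - 1) / 2 * (- (4 * y / r y) / (2 * sqrt (q y)))) (at y)"
proof -
  have rp: "r y > 0" unfolding r_def using c by (simp add: add_pos_nonneg)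
  have qp: "q y > 0" unfolding q_def using rp by simp
  have dr: "(r has_real_derivative 12 * y / r y) (at y)"
  proof -
    have a: "((\<lambda>y. c + 12 * y^2) has_real_derivative 24 * y) (at y)"
      by (auto intro!: derivative_eq_intros)
    have "c + 12 * y^2 > 0" using c by (simp add: add_pos_nonneg)
    from DERIV_chain2[OF DERIV_real_sqrt[OF this] a]
    show ?thesis unfolding r_def by (simp add: field_simps)
  qed
  have dq: "(q has_real_derivative 4 * y / r y) (at y)"
    unfolding q_def using dr by (auto intro!: derivative_eq_intros)
  have dW: "(W has_real_derivative - (4 * y / r y) / (2 * sqrt (q y))) (at y)"
  proof -
    have "((\<lambda>y. sqrt (q y)) has_real_derivative (4 * y / r y) / (2 * sqrt (q y))) (at y)"
      using DERIV_chain2[OF DERIV_real_sqrt[OF qp] dq] by (simp add: divide_simps mult.commute)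
    from DERIV_minus[OF this] show ?thesis unfolding W_def by simp
  qed
  show ?thesis
    apply (rule derivative_eq_intros refl dW | simp)+
    using rp qp apply (simp add: field_simps power2_eq_square)
    done
qed

lemma slow:
  fixes \<mu> :: real assumes m1: "-1/8 < \<mu>" and m2: "\<mu> < 1/24"
  obtains u w :: "real \<Rightarrow> real" and T :: real where "T > 0"
   "\<And>t. t \<in> {0..T} \<Longrightarrow> (u has_real_derivative w t) (at t)"
   "\<And>t. t \<in> {0..T} \<Longrightarrow> ((\<lambda>t. (w t^3 - w t)/2) has_real_derivative u t) (at t)"
   "\<And>t. t \<in> {0..T} \<Longrightarrow> w t < -1/sqrt 3"
   "\<And>t. t \<in> {0..T} \<Longrightarrow> 4*u t^2 - 3*w t^4 + 2*w t^2 = 8*\<mu>"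
   "u 0 = sqrt(1+8*\<mu>)/2" "u T = -sqrt(1+8*\<mu>)/2" "w 0 = -1" "w T = -1"
proof -
  define c where "c = 1 - 24*\<mu>"
  have c: "c > 0" using m2 c_def by simp
  define s where "s = sqrt(1+8*\<mu>)/2"
  have "1 + 8*\<mu> > 0" using m1 by simp
  hence s: "s > 0" unfolding s_def by simp
  have s2: "4 * s^2 = 1 + 8*\<mu>" using m1 unfolding s_def by (simp add: power_divide)
  define r where "r \<equiv> \<lambda>y::real. sqrt (c + 12 * y^2)"
  define q where "q \<equiv> \<lambda>y. (1 + r y) / 3"
  define W where "W \<equiv> \<lambda>y. - sqrt (q y)"
  define g where "g \<equiv> \<lambda>y. 1 / sqrt (q y)"
  have rp: "r y > 0" for y unfolding r_def using c by (simp add: add_pos_nonneg)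
  have qp: "q y > 0" for y unfolding q_def using rp[of y] by simp
  have gp: "g y > 0" for y unfolding g_def using qp[of y] by simp
  have geven: "g (-y) = g y" for y unfolding g_def q_def r_def by simp
  have gW: "inverse (g y) = - W y" for y unfolding g_def W_def by simp
  have nz: "1 + sqrt (c + 12 * y^2) \<noteq> 0" for y
  proof -
    have "0 \<le> c + 12 * y^2" using c by simp
    hence "0 \<le> sqrt (c + 12 * y^2)" by simp
    thus ?thesis by linarith
  qed
  have gc: "continuous_on UNIV g"
    unfolding g_def q_def r_def using c nz
    by (intro continuous_intros) (auto simp: add_pos_nonneg)
  define K where "K = s + 2"
  define F where "F = (\<lambda>y. integral {-K..y} g)"
  have dF: "(F has_real_derivative g y) (at y)" if "-K < y" "y < K" for y
  proof -
    have "(F has_real_derivative g y) (at y within {-K..K})"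
      unfolding F_def by (rule integral_has_real_derivative) (use gc that in \<open>auto intro: continuous_on_subset\<close>)
    moreover have "at y within {-K..K} = at y"
      by (rule at_within_interior) (use that in simp)
    ultimately show ?thesis by simp
  qed
  define D where "D = s + 1"
  have D: "D > 0" "s < D" using s D_def by auto
  define tau where "tau = (\<lambda>y. F y - F (-s))"
  have dtau: "(tau has_real_derivative g y) (at y)" if "-D \<le> y" "y \<le> D" for y
    unfolding tau_def using dF[of y] that D_def K_def by (auto intro!: derivative_eq_intros)
  have mono: "tau x < tau y" if "-D \<le> x" "x < y" "y \<le> D" for x y
  proof (rule DERIV_pos_imp_increasing[of x y tau])
    show "x < y" by fact
    fix z assume "x \<le> z" "z \<le> y"
    hence "-D \<le> z" "z \<le> D" using that by linarith+
    thus "\<exists>y. (tau has_real_derivative y) (at z) \<and> 0 < y" using dtau gp by blast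
  qed
  have ctau: "isCont tau y" if "-D \<le> y" "y \<le> D" for y
    using dtau[OF that] by (rule DERIV_isCont)
  have ctau_on: "continuous_on {-D..D} tau"
    using ctau by (intro continuous_at_imp_continuous_on) auto
  define Y where "Y = (\<lambda>t. THE y. y \<in> {-D..D} \<and> tau y = t)"
  have uniq: "x = y" if "x \<in> {-D..D}" "y \<in> {-D..D}" "tau x = tau y" for x y
    using mono[of x y] mono[of y x] that by (cases x y rule: linorder_cases) auto
  have Ytau: "Y (tau z) = z" if "z \<in> {-D..D}" for z
    unfolding Y_def
  proof (rule the_equality)
    show "z \<in> {-D..D} \<and> tau z = tau z" using that by simp
    fix y assume "y \<in> {-D..D} \<and> tau y = tau z"
    thus "y = z" using uniq[of y z] that by blast
  qed
  have Yex: "Y t \<in> {-D..D} \<and> tau (Y t) = t" if h: "tau (-D) \<le> t" "t \<le> tau D" for t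
  proof -
    obtain y where "-D \<le> y" "y \<le> D" "tau y = t"
      using IVT'[of tau "-D" t D] h ctau_on D by auto
    thus ?thesis using Ytau[of y] by auto
  qed
  have Yin: "-D < Y t \<and> Y t < D" if "tau (-D) < t" "t < tau D" for t
  proof -
    have "Y t \<in> {-D..D}" "tau (Y t) = t" using Yex[of t] that by auto
    moreover have "Y t \<noteq> -D" "Y t \<noteq> D" using calculation that by auto
    ultimately show ?thesis by auto
  qed
  have dY: "(Y has_real_derivative inverse (g (Y t))) (at t)" if t: "tau (-D) < t" "t < tau D" for t
  proof (rule DERIV_inverse_function[where f=tau and a="tau (-D)" and b="tau D"])
    show "(tau has_real_derivative g (Y t)) (at (Y t))" using dtau Yin[OF t] by auto
    show "g (Y t) \<noteq> 0" using gp[of "Y t"] by simp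
    show "tau (-D) < t" "t < tau D" by fact+
    show "tau (Y y) = y" if "tau (-D) < y" "y < tau D" for y using Yex[of y] that by auto
    have "isCont Y (tau (Y t))"
      by (rule isCont_inverse_function2[where a="-D" and b=D]) (use Yin[OF t] Ytau ctau in auto)
    thus "isCont Y t" using Yex[of t] t by simp
  qed
  define T where "T = tau s"
  have tau0: "tau (-s) = 0" unfolding tau_def by simp
  have T: "T > 0" unfolding T_def using mono[of "-s" s] tau0 s D by simp
  have range: "tau (-D) < t \<and> t < tau D" if "t \<in> {0..T}" for t
    using mono[of "-D" "-s"] mono[of s D] that tau0 s D unfolding T_def by auto
  define u where "u = (\<lambda>t. - Y t)"
  define w where "w = (\<lambda>t. W (u t))"
  have du: "(u has_real_derivative w t) (at t)" if "t \<in> {0..T}" for t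
  proof -
    have "(u has_real_derivative - inverse (g (Y t))) (at t)"
      unfolding u_def using dY[of t] range[OF that] by (auto intro!: derivative_eq_intros)
    moreover have "- inverse (g (Y t)) = w t"
      unfolding w_def u_def using gW[of "- Y t"] geven[of "Y t"] by simp
    ultimately show ?thesis by simp
  qed
  have dv: "((\<lambda>t. (w t^3 - w t)/2) has_real_derivative u t) (at t)" if "t \<in> {0..T}" for t
  proof -
    have V: "((\<lambda>y. (W y ^ 3 - W y) / 2) has_real_derivative
           (3 * W y ^ 2 - 1) / 2 * (- (4 * y / r y) / (2 * sqrt (q y)))) (at y)" for y
      using dV[OF c, of y] unfolding W_def q_def r_def by simp
    have "((\<lambda>t. (W (u t) ^ 3 - W (u t)) / 2) has_real_derivative
           (3 * W (u t) ^ 2 - 1) / 2 * (- (4 * u t / r (u t)) / (2 * sqrt (q (u t)))) * w t) (at t)"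
      by (rule DERIV_chain2[OF V du[OF that]])
    moreover have "(3 * W (u t) ^ 2 - 1) / 2 * (- (4 * u t / r (u t)) / (2 * sqrt (q (u t)))) * w t = u t"
    proof -
      have "W (u t)^2 = q (u t)" unfolding W_def using qp[of "u t"] by simp
      hence "3 * W (u t) ^ 2 - 1 = r (u t)" unfolding q_def by simp
      moreover have "w t = - sqrt (q (u t))" unfolding w_def W_def by simp
      ultimately show ?thesis using rp[of "u t"] qp[of "u t"] by (simp add: field_simps)
    qed
    ultimately show ?thesis unfolding w_def by simp
  qed
  have wlt: "w t < -1/sqrt 3" for t
  proof -
    have "1/3 < q (u t)" unfolding q_def using rp[of "u t"] by simp
    hence "sqrt (1/3) < sqrt (q (u t))" by simp
    thus ?thesis unfolding w_def W_def by (simp add: real_sqrt_divide)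
  qed
  have energy: "4*u t^2 - 3*w t^4 + 2*w t^2 = 8*\<mu>" for t
  proof -
    have w2: "w t^2 = q (u t)" unfolding w_def W_def using qp[of "u t"] by simp
    have r2: "r (u t)^2 = c + 12 * u t^2" unfolding r_def using c by (simp add: add_pos_nonneg)
    have "w t^4 = (w t^2)^2" by simp
    thus ?thesis unfolding w2 q_def using r2 c_def by (simp add: field_simps power2_eq_square)
  qed
  have u0: "u 0 = s" unfolding u_def using Ytau[of "-s"] tau0 D s by simp
  have uT: "u T = -s" unfolding u_def T_def using Ytau[of s] D s by simp
  have Ws: "W s = -1" "W (-s) = -1"
  proof -
    have "c + 12 * s^2 = 4" using s2 c_def by simp
    hence "r s = 2" "r (-s) = 2" unfolding r_def by simp_all
    thus "W s = -1" "W (-s) = -1" unfolding W_def q_def by simp_all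
  qed
  have w0: "w 0 = -1" unfolding w_def u0 using Ws by simp
  have wT: "w T = -1" unfolding w_def uT using Ws by simp
  show ?thesis
    apply (rule that[of T u w])
    using T du dv wlt energy w0 wT apply blast+
    using u0 uT w0 wT unfolding s_def by simp_all

qed

lemma th_top: "((\<lambda>t::real. tanh (t/2)) \<longlongrightarrow> 1) at_top"
  by (rule filterlim_compose[OF tanh_real_at_top]) real_asymp

lemma th_bot: "((\<lambda>t::real. tanh (t/2)) \<longlongrightarrow> -1) at_bot"
  by (rule filterlim_compose[OF tanh_real_at_bot]) real_asymp

lemma fast1: "layer_heteroclinic 0 (\<lambda>t. tanh (t/2)) (\<lambda>t. (1 - tanh (t/2)^2)/2) (-1) 1"
proof -
  have d: "((\<lambda>t. tanh (t/2)) has_real_derivative (1 - tanh (t/2)^2)/2) (at t)" for t :: real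
    by (auto intro!: derivative_eq_intros)
  have d2: "((\<lambda>t. (1 - tanh (t/2)^2)/2) has_real_derivative ((tanh (t/2) ^ 3 - tanh (t/2)) / 2 - 0)) (at t)" for t :: real
    by (rule derivative_eq_intros refl d | simp)+ (simp add: algebra_simps power2_eq_square power3_eq_cube)
  have l1: "((\<lambda>t::real. (1 - tanh (t/2)^2)/2) \<longlongrightarrow> 0) at_top"
    using tendsto_divide[OF tendsto_diff[OF tendsto_const[of 1] tendsto_power[OF th_top, of 2]] tendsto_const[of 2]] by simp
  have l2: "((\<lambda>t::real. (1 - tanh (t/2)^2)/2) \<longlongrightarrow> 0) at_bot"
    using tendsto_divide[OF tendsto_diff[OF tendsto_const[of 1] tendsto_power[OF th_bot, of 2]] tendsto_const[of 2]] by simp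
  show ?thesis unfolding layer_heteroclinic_def using d d2 l1 l2 th_top th_bot by simp
qed

lemma fast2: "layer_heteroclinic 0 (\<lambda>t. - tanh (t/2)) (\<lambda>t. - ((1 - tanh (t/2)^2)/2)) 1 (-1)"
proof -
  have d: "((\<lambda>t. tanh (t/2)) has_real_derivative (1 - tanh (t/2)^2)/2) (at t)" for t :: real
    by (auto intro!: derivative_eq_intros)
  have d2: "((\<lambda>t. (1 - tanh (t/2)^2)/2) has_real_derivative ((tanh (t/2) ^ 3 - tanh (t/2)) / 2 - 0)) (at t)" for t :: real
    by (rule derivative_eq_intros refl d | simp)+ (simp add: algebra_simps power2_eq_square power3_eq_cube)
  have l1: "((\<lambda>t::real. (1 - tanh (t/2)^2)/2) \<longlongrightarrow> 0) at_top"
    using tendsto_divide[OF tendsto_diff[OF tendsto_const[of 1] tendsto_power[OF th_top, of 2]] tendsto_const[of 2]] by simp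
  have l2: "((\<lambda>t::real. (1 - tanh (t/2)^2)/2) \<longlongrightarrow> 0) at_bot"
    using tendsto_divide[OF tendsto_diff[OF tendsto_const[of 1] tendsto_power[OF th_bot, of 2]] tendsto_const[of 2]] by simp
  have dm: "((\<lambda>t. - tanh (t/2)) has_real_derivative - ((1 - tanh (t/2)^2)/2)) (at t)" for t :: real
    using DERIV_minus[OF d] .
  have dm2: "((\<lambda>t. - ((1 - tanh (t/2)^2)/2)) has_real_derivative ((- tanh (t/2)) ^ 3 - (- tanh (t/2))) / 2 - 0) (at t)" for t :: real
    using DERIV_minus[OF d2[of t]] by (rule DERIV_cong) (simp add: field_simps power3_eq_cube)
  show ?thesis unfolding layer_heteroclinic_def using dm dm2 tendsto_minus[OF l1] tendsto_minus[OF l2]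
      tendsto_minus[OF th_top] tendsto_minus[OF th_bot] by simp
qed

lemma H_fast: "H (ub, 0, W, Z) = (4*ub^2 - 2*W^2 + W^4 - 4*Z^2)/8"
  unfolding H_def by simp

lemma suff:
  fixes \<mu> :: real assumes m1: "-1/8 < \<mu>" and m2: "\<mu> < 1/24"
  shows "\<exists>\<gamma>. sing_orbit_2slow_2fast \<gamma> \<and> \<gamma> \<subseteq> {p. H p = \<mu>}"
proof -
  obtain u w :: "real \<Rightarrow> real" and T :: real where T: "T > 0" and
   du: "\<And>t. t \<in> {0..T} \<Longrightarrow> (u has_real_derivative w t) (at t)" and
   dv: "\<And>t. t \<in> {0..T} \<Longrightarrow> ((\<lambda>t. (w t^3 - w t)/2) has_real_derivative u t) (at t)" and
   wl: "\<And>t. t \<in> {0..T} \<Longrightarrow> w t < -1/sqrt 3" and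
   en: "\<And>t. t \<in> {0..T} \<Longrightarrow> 4*u t^2 - 3*w t^4 + 2*w t^2 = 8*\<mu>" and
   u0: "u 0 = sqrt(1+8*\<mu>)/2" and uT: "u T = -sqrt(1+8*\<mu>)/2" and w0: "w 0 = -1" and wT: "w T = -1"
    apply (rule slow[OF m1 m2])
    apply (rule that)
    apply assumption+
    done
  define s where "s = sqrt(1+8*\<mu>)/2"
  have s2: "4 * s^2 = 1 + 8*\<mu>" using m1 unfolding s_def by (simp add: power_divide)
  define v where "v = (\<lambda>t. (w t^3 - w t)/2)"
  define W1 where "W1 = (\<lambda>t::real. tanh (t/2))"
  define Z1 where "Z1 = (\<lambda>t::real. (1 - tanh (t/2)^2)/2)"
  define W2 where "W2 = (\<lambda>t::real. - tanh (t/2))"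
  define Z2 where "Z2 = (\<lambda>t::real. - ((1 - tanh (t/2)^2)/2))"
  define \<gamma> where "\<gamma> = (\<lambda>t. (u t, v t, w t, (\<lambda>_. 0::real) t)) ` {0..T}
          \<union> (\<lambda>t. (-s, 0::real, W1 t, Z1 t)) ` UNIV
          \<union> (\<lambda>t. ((\<lambda>t. - u t) t, (\<lambda>t. - v t) t, (\<lambda>t. - w t) t, (\<lambda>_. 0::real) t)) ` {0..T}
          \<union> (\<lambda>t. (s, 0::real, W2 t, Z2 t)) ` UNIV"
  have R1: "reduced_traj u v w (\<lambda>_. 0) T"
    unfolding reduced_traj_def C0_def using T du dv unfolding v_def
    by (auto intro: has_field_derivative_at_within)
  have L1: "\<forall>t\<in>{0..T}. (u t, v t, w t, (\<lambda>_. 0::real) t) \<in> C0l"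
    unfolding C0l_def C0_def v_def using wl by auto
  have R2: "reduced_traj (\<lambda>t. - u t) (\<lambda>t. - v t) (\<lambda>t. - w t) (\<lambda>_. 0) T"
    unfolding reduced_traj_def C0_def
  proof (intro conjI T ballI)
    fix t assume t: "t \<in> {0..T}"
    show "(- u t, - v t, - w t, 0) \<in> {(u, v, w, z). z = 0 \<and> v = (w ^ 3 - w) / 2}"
      unfolding v_def by (simp add: power3_eq_cube algebra_simps)
    show "((\<lambda>t. - u t) has_real_derivative - w t) (at t within {0..T})"
      using DERIV_minus[OF du[OF t]] by (rule has_field_derivative_at_within)
    show "((\<lambda>t. - v t) has_real_derivative - u t) (at t within {0..T})"
      using DERIV_minus[OF dv[OF t]] unfolding v_def by (rule has_field_derivative_at_within)
  qed
  have L2: "\<forall>t\<in>{0..T}. (- u t, - v t, - w t, (\<lambda>_. 0::real) t) \<in> C0r"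
  proof
    fix t assume t: "t \<in> {0..T}"
    have "w t < -(1/sqrt 3)" using wl[OF t] by simp
    hence "1/sqrt 3 < - w t" by linarith
    thus "(- u t, - v t, - w t, (\<lambda>_. 0::real) t) \<in> C0r"
      unfolding C0r_def C0_def v_def by (simp add: power3_eq_cube algebra_simps)
  qed
  have F1: "layer_heteroclinic 0 W1 Z1 (-1) 1" unfolding W1_def Z1_def by (rule fast1)
  have F2: "layer_heteroclinic 0 W2 Z2 1 (-1)" unfolding W2_def Z2_def by (rule fast2)
  have in0: "(0::real) \<in> {0..T}" "T \<in> {0..T}" using T by auto
  have v0: "v 0 = 0" "v T = 0" unfolding v_def using w0 wT by simp_all
  have E1: "(u T, v T, w T, (\<lambda>_. 0::real) T) = (-s, 0, -1, 0)" using uT v0 wT s_def by simp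
  have E2: "(-s, 0::real, 1::real, 0::real) = ((\<lambda>t. - u t) 0, (\<lambda>t. - v t) 0, (\<lambda>t. - w t) 0, (\<lambda>_. 0::real) 0)"
    using u0 v0 w0 s_def by simp
  have E3: "((\<lambda>t. - u t) T, (\<lambda>t. - v t) T, (\<lambda>t. - w t) T, (\<lambda>_. 0::real) T) = (s, 0, 1, 0)"
    using uT v0 wT s_def by simp
  have E4: "(s, 0::real, -1::real, 0::real) = (u 0, v 0, w 0, (\<lambda>_. 0::real) 0)"
    using u0 v0 w0 s_def by simp
  have SO: "sing_orbit_2slow_2fast \<gamma>"
    unfolding sing_orbit_2slow_2fast_def
    apply (rule exI[where x=u], rule exI[where x=v], rule exI[where x=w], rule exI[where x="\<lambda>_. 0"], rule exI[where x=T])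
    apply (rule exI[where x="\<lambda>t. - u t"], rule exI[where x="\<lambda>t. - v t"], rule exI[where x="\<lambda>t. - w t"], rule exI[where x="\<lambda>_. 0"], rule exI[where x=T])
    apply (rule exI[where x="-s"], rule exI[where x=0], rule exI[where x=W1], rule exI[where x=Z1], rule exI[where x="-1"], rule exI[where x=1])
    apply (rule exI[where x="s"], rule exI[where x=0], rule exI[where x=W2], rule exI[where x=Z2], rule exI[where x="1"], rule exI[where x="-1"])
    using R1 L1 R2 L2 F1 F2 E1 E2 E3 E4 unfolding \<gamma>_def by (intro conjI) (assumption | rule refl)+
  have HS: "\<gamma> \<subseteq> {p. H p = \<mu>}"
  proof -
    have a: "H (u t, v t, w t, 0) = \<mu>" if "t \<in> {0..T}" for t
      using en[OF that] H_C0[of "u t" "w t"] unfolding v_def by simp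
    have b: "H (- u t, - v t, - w t, 0) = \<mu>" if "t \<in> {0..T}" for t
      using en[OF that] unfolding v_def H_def by (simp add: field_simps power2_eq_square power3_eq_cube power4_eq_xxxx)
    have c: "H (-s, 0, W1 t, Z1 t) = \<mu>" "H (s, 0, W2 t, Z2 t) = \<mu>" for t
      unfolding H_fast W1_def Z1_def W2_def Z2_def using s2
      by (simp_all add: field_simps power2_eq_square power4_eq_xxxx)
    show ?thesis unfolding \<gamma>_def using a b c by auto
  qed
  show ?thesis using SO HS by blast
qed


theorem proposition1:
  fixes \<mu> :: real
  shows "(\<exists>\<gamma>. sing_orbit_2slow_2fast \<gamma> \<and> \<gamma> \<subseteq> {p. H p = \<mu>})
         \<longleftrightarrow> \<mu> \<in> {-1/8 <..< 1/24}"
proof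
  assume "\<exists>\<gamma>. sing_orbit_2slow_2fast \<gamma> \<and> \<gamma> \<subseteq> {p. H p = \<mu>}"
  then obtain \<gamma> where "sing_orbit_2slow_2fast \<gamma>" "\<gamma> \<subseteq> {p. H p = \<mu>}" by blast
  from nec[OF this] show "\<mu> \<in> {-1/8 <..< 1/24}" by simp
next
  assume "\<mu> \<in> {-1/8 <..< 1/24}"
  thus "\<exists>\<gamma>. sing_orbit_2slow_2fast \<gamma> \<and> \<gamma> \<subseteq> {p. H p = \<mu>}" using suff by simp
qed

end
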